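(* Work in $\ell_1$ with sequences indexed by $\{0,1,2,\dots\}$ and standard basis $(e_k)$. Let $\xi$ be a random variable with $\Pr\{\xi=k\}=2^{-k}$ for $k=1,2,\dots$, and let $A\colon\Omega\to\mathcal{L}(\ell_1)$ be $Ax:=x_\xi e_0$ (the operator $|0\rangle\langle\xi|$). Let $\xi_1,\xi_2,\dots$ be i.i.d. copies of $\xi$ and $A_ix:=x_{\xi_i}e_0$. Then for every $x\in\ell_1$, $T>0$, $\varepsilon>0$, $$\lim_{n\to\infty}\Pr\Big\{\sup_{t\in[0,T]}\big\|\big(e^{A_1t/n}\cdots e^{A_nt/n}-e^{t\,\mathbb{E}A}\big)x\big\|_{\ell_1}>\varepsilon\Big\}=0,$$ where $\mathbb{E}A x=\big(\sum_{k\ge1}2^{-k}x_k\big)e_0$.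
   Context: $(\Omega,\mathcal{F},\Pr)$ is a probability space; $e^{Bt}=\sum_k t^kB^k/k!$ for bounded $B$. *)

theory Defs
  imports "HOL-Probability.Probability"
begin

definition l1 :: "(nat \<Rightarrow> real) set" where
  "l1 = {x. summable (\<lambda>k. \<bar>x k\<bar>)}"

definition l1norm :: "(nat \<Rightarrow> real) \<Rightarrow> real" where
  "l1norm x = (\<Sum>k. \<bar>x k\<bar>)"

definition basis_vec :: "nat \<Rightarrow> nat \<Rightarrow> real" where
  "basis_vec k = (\<lambda>j. if j = k then 1 else 0)"

definition opA :: "nat \<Rightarrow> (nat \<Rightarrow> real) \<Rightarrow> (nat \<Rightarrow> real)" where
  "opA m x = (\<lambda>j. x m * basis_vec 0 j)"

definition opEA :: "(nat \<Rightarrow> real) \<Rightarrow> (nat \<Rightarrow> real)" where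
  "opEA x = (\<lambda>j. (\<Sum>k. (1/2) ^ Suc k * x (Suc k)) * basis_vec 0 j)"

text \<open>Operator exponential e^{Bt} x = sum_k t^k B^k x / k!  (for bounded B the series
  converges in l1, hence coordinatewise, so it is computed coordinatewise).\<close>
definition op_exp :: "((nat \<Rightarrow> real) \<Rightarrow> (nat \<Rightarrow> real)) \<Rightarrow> real \<Rightarrow> (nat \<Rightarrow> real) \<Rightarrow> (nat \<Rightarrow> real)" where
  "op_exp B t x = (\<lambda>j. \<Sum>k. (t ^ k / fact k) * ((B ^^ k) x) j)"

text \<open>Product e^{A_1 s} ... e^{A_n s} applied to x (rightmost factor acts first),
  where A_i = opA (xi i omega).\<close>
definition prod_exp :: "(nat \<Rightarrow> nat) \<Rightarrow> nat \<Rightarrow> real \<Rightarrow> (nat \<Rightarrow> real) \<Rightarrow> (nat \<Rightarrow> real)" where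
  "prod_exp idx n s x = foldr (\<lambda>i y. op_exp (opA (idx i)) s y) [1..<Suc n] x"

end

theory Submission
  imports Defs
begin


lemma funpow_zero_nil:
  fixes B :: "(nat \<Rightarrow> real) \<Rightarrow> (nat \<Rightarrow> real)"
  assumes "B (\<lambda>_. 0) = (\<lambda>_. 0)"
  shows "(B ^^ k) (\<lambda>_. 0) = (\<lambda>_. (0::real))"
proof (induction k)
  case 0 show ?case by simp
next
  case (Suc k)
  have "(B ^^ Suc k) (\<lambda>_. 0) = B ((B ^^ k) (\<lambda>_. 0))" by simp
  also have "\<dots> = (\<lambda>_. 0)" using Suc assms by simp
  finally show ?case .
qed

lemma op_exp_nil:
  fixes B :: "(nat \<Rightarrow> real) \<Rightarrow> (nat \<Rightarrow> real)"
  assumes z: "B (\<lambda>_. 0) = (\<lambda>_. 0)" and nil: "\<And>y. B (B y) = (\<lambda>_. (0::real))"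
  shows "op_exp B s y = (\<lambda>j. y j + s * B y j)"
proof -
  have k: "(B ^^ Suc (Suc k)) y = (\<lambda>_. 0)" for k
    proof -
    have "(B ^^ Suc (Suc k)) y = (B ^^ k) (B (B y))"
      by (simp only: funpow_Suc_right o_def)
    also have "\<dots> = (\<lambda>_. 0)" using nil funpow_zero_nil[of B k, OF z] by simp
    finally show ?thesis .
  qed
  have "(\<Sum>k. (s ^ k / fact k) * ((B ^^ k) y) j) = (\<Sum>k\<in>{0,1}. (s ^ k / fact k) * ((B ^^ k) y) j)" for j
  proof (rule suminf_finite)
    fix n :: nat assume "n \<notin> {0,1}"
    then have "n = Suc (Suc (n - 2))" by auto
    then have "(B ^^ n) y = (\<lambda>_. 0)" using k by metis
    then show "(s ^ n / fact n) * ((B ^^ n) y) j = 0" by simp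
  qed simp
  then show ?thesis unfolding op_exp_def by simp
qed

lemma opA_props:
  assumes "m \<noteq> 0"
  shows "opA m (\<lambda>_. 0) = (\<lambda>_. 0)" "opA m (opA m y) = (\<lambda>_. 0)"
  using assms by (auto simp: opA_def basis_vec_def)

lemma opEA_props:
  shows "opEA (\<lambda>_. 0) = (\<lambda>_. 0)" "opEA (opEA y) = (\<lambda>_. 0)"
  by (auto simp: opEA_def basis_vec_def)

lemma op_exp_opA:
  assumes "m \<noteq> 0"
  shows "op_exp (opA m) s y = (\<lambda>j. y j + s * y m * basis_vec 0 j)"
proof -
  have "op_exp (opA m) s y = (\<lambda>j. y j + s * opA m y j)"
    by (rule op_exp_nil[OF opA_props[OF assms]])
  then show ?thesis by (simp add: opA_def mult.assoc)
qed

lemma op_exp_opEA: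
  "op_exp opEA t y = (\<lambda>j. y j + t * (\<Sum>k. (1/2) ^ Suc k * y (Suc k)) * basis_vec 0 j)"
proof -
  have "op_exp opEA t y = (\<lambda>j. y j + t * opEA y j)"
    by (rule op_exp_nil[OF opEA_props])
  then show ?thesis by (simp only: opEA_def mult.assoc)
qed

lemma foldr_opA:
  assumes "\<And>i. i \<in> set L \<Longrightarrow> idx i \<noteq> 0"
  shows "foldr (\<lambda>i y. op_exp (opA (idx i)) s y) L x = (\<lambda>j. x j + s * (\<Sum>i\<leftarrow>L. x (idx i)) * basis_vec 0 j)"
  using assms
proof (induction L)
  case Nil then show ?case by simp
next
  case (Cons a L)
  then have IH: "foldr (\<lambda>i y. op_exp (opA (idx i)) s y) L x = (\<lambda>j. x j + s * (\<Sum>i\<leftarrow>L. x (idx i)) * basis_vec 0 j)"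
    by simp
  have a: "idx a \<noteq> 0" using Cons by simp
  show ?case using a
    by (simp add: IH op_exp_opA basis_vec_def algebra_simps)
qed

lemma prod_exp_formula:
  assumes "\<And>i. i \<in> {1..n} \<Longrightarrow> idx i \<noteq> 0"
  shows "prod_exp idx n s x = (\<lambda>j. x j + s * (\<Sum>i\<in>{1..n}. x (idx i)) * basis_vec 0 j)"
proof -
  have "(\<Sum>i\<leftarrow>[1..<Suc n]. x (idx i)) = (\<Sum>i\<in>{1..n}. x (idx i))"
    by (simp only: sum_set_upt_conv_sum_list_nat[symmetric] set_upt atLeastLessThanSuc_atLeastAtMost)
  then show ?thesis unfolding prod_exp_def using assms
    by (subst foldr_opA) auto
qed

lemma l1norm_e0: "l1norm (\<lambda>j. a * basis_vec 0 j) = \<bar>a\<bar>"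
proof -
  have "(\<Sum>j. \<bar>a * basis_vec 0 j\<bar>) = (\<Sum>j\<in>{0}. \<bar>a * basis_vec 0 j\<bar>)"
    by (rule suminf_finite) (auto simp: basis_vec_def)
  then show ?thesis by (simp add: l1norm_def basis_vec_def)
qed

lemma diff_formula:
  assumes "\<And>i. i \<in> {1..n} \<Longrightarrow> idx i \<noteq> 0"
  shows "l1norm (\<lambda>j. prod_exp idx n (t / real n) x j - op_exp opEA t x j)
       = \<bar>t * ((\<Sum>i\<in>{1..n}. x (idx i)) / real n - (\<Sum>k. (1/2) ^ Suc k * x (Suc k)))\<bar>"
proof -
  have "(\<lambda>j. prod_exp idx n (t / real n) x j - op_exp opEA t x j)
     = (\<lambda>j. (t * ((\<Sum>i\<in>{1..n}. x (idx i)) / real n - (\<Sum>k. (1/2) ^ Suc k * x (Suc k)))) * basis_vec 0 j)"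
    apply (subst prod_exp_formula[OF assms], simp)
    apply (subst op_exp_opEA)
    apply (rule ext)
    apply (simp add: algebra_simps diff_divide_distrib)
    done
  then show ?thesis by (simp add: l1norm_e0)
qed



lemma meas_pred:
  assumes "X \<in> measurable M (count_space UNIV)"
  shows "{\<omega>\<in>space M. P (X \<omega>)} \<in> sets M"
proof -
  have "{\<omega>\<in>space M. P (X \<omega>)} = X -` {k. P k} \<inter> space M" by auto
  then show ?thesis using measurable_sets[OF assms, of "{k. P k}"] by simp
qed

lemma half_sums: "(\<lambda>k. (1/2::real) ^ Suc k) sums 1"
proof -
  have "(\<lambda>k. (1/2::real) ^ k) sums (1 / (1 - 1/2))" by (rule geometric_sums) simp
  then have "(\<lambda>k. (1/2) * (1/2::real) ^ k) sums ((1/2) * (1 / (1 - 1/2)))" by (rule sums_mult)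
  then show ?thesis by simp
qed

lemma (in prob_space) ae_nonzero:
  assumes X: "X \<in> measurable M (count_space UNIV)"
    and d: "\<And>k. k \<ge> 1 \<Longrightarrow> prob {\<omega>\<in>space M. X \<omega> = k} = (1/2)^k"
  shows "AE \<omega> in M. X \<omega> \<noteq> (0::nat)"
proof -
  let ?A = "\<lambda>k. {\<omega>\<in>space M. X \<omega> = Suc k}"
  have "(\<lambda>k. prob (?A k)) sums prob (\<Union>k. ?A k)"
    by (rule measure_UNION) (auto simp: disjoint_family_on_def intro: meas_pred[OF X])
  moreover have "prob (?A k) = (1/2)^Suc k" for k using d[of "Suc k"] by simp
  ultimately have "(\<lambda>k. (1/2::real)^Suc k) sums prob (\<Union>k. ?A k)" by simp
  then have "prob (\<Union>k. ?A k) = 1" using half_sums sums_unique2 by blast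
  moreover have "(\<Union>k. ?A k) = {\<omega>\<in>space M. X \<omega> \<noteq> 0}" by (auto simp: not0_implies_Suc)
  ultimately have "AE \<omega> in M. \<omega> \<in> {\<omega>\<in>space M. X \<omega> \<noteq> 0}"
    by (intro AE_prob_1) simp
  then show ?thesis by eventually_elim auto
qed

lemma (in prob_space) mean_x:
  fixes x :: "nat \<Rightarrow> real"
  assumes X: "X \<in> measurable M (count_space UNIV)"
    and d: "\<And>k. k \<ge> 1 \<Longrightarrow> prob {\<omega>\<in>space M. X \<omega> = k} = (1/2)^k"
    and K: "\<And>k. \<bar>x k\<bar> \<le> K0"
  shows "expectation (\<lambda>\<omega>. x (X \<omega>)) = (\<Sum>k. (1/2) ^ Suc k * x (Suc k))"
proof -
  define f where "f k \<omega> = x (Suc k) * indicator {\<omega>\<in>space M. X \<omega> = Suc k} \<omega>" for k \<omega>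
  have ev: "{\<omega>\<in>space M. X \<omega> = Suc k} \<in> events" for k by (rule meas_pred[OF X])
  have pr: "prob {\<omega>\<in>space M. X \<omega> = Suc k} = (1/2)^Suc k" for k using d[of "Suc k"] by simp
  have int: "integrable M (f k)" for k
    unfolding f_def using ev[of k] by (intro integrable_mult_right integrable_real_indicator) (auto simp: less_top[symmetric])
  have intf: "integral\<^sup>L M (f k) = (1/2) ^ Suc k * x (Suc k)" for k
    unfolding f_def using ev[of k] pr[of k] by (simp add: Int_absorb2)
  have intn: "(\<integral>\<omega>. norm (f k \<omega>) \<partial>M) = (1/2) ^ Suc k * \<bar>x (Suc k)\<bar>" for k
  proof -
    have "(\<lambda>\<omega>. norm (f k \<omega>)) = (\<lambda>\<omega>. \<bar>x (Suc k)\<bar> * indicator {\<omega>\<in>space M. X \<omega> = Suc k} \<omega>)"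
      by (auto simp: f_def indicator_def)
    then show ?thesis using ev[of k] pr[of k] by (simp add: Int_absorb2)
  qed
  have summ_pt: "summable (\<lambda>k. norm (f k \<omega>))" for \<omega>
    by (rule summable_finite[of "{X \<omega> - 1}"]) (auto simp: f_def indicator_def)
  have "summable (\<lambda>k. K0 * (1/2::real) ^ Suc k)"
    using half_sums by (intro summable_mult) (simp add: sums_summable)
  then have summ_int: "summable (\<lambda>k. (\<integral>\<omega>. norm (f k \<omega>) \<partial>M))"
    unfolding intn
    by (rule summable_comparison_test[rotated]) (auto simp: K mult.commute intro!: exI[of _ 0] mult_right_mono)
  have sumint: "integrable M (\<lambda>\<omega>. \<Sum>k. f k \<omega>)"
    apply (rule integrable_suminf[OF int])
     apply (rule AE_I2, rule summ_pt)
    apply (rule summ_int)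
    done
  have "(\<integral>\<omega>. (\<Sum>k. f k \<omega>) \<partial>M) = (\<Sum>k. integral\<^sup>L M (f k))"
    apply (rule integral_suminf[OF int])
     apply (rule AE_I2, rule summ_pt)
    apply (rule summ_int)
    done
  also have "\<dots> = (\<Sum>k. (1/2) ^ Suc k * x (Suc k))" by (simp add: intf)
  finally have eq: "(\<integral>\<omega>. (\<Sum>k. f k \<omega>) \<partial>M) = (\<Sum>k. (1/2) ^ Suc k * x (Suc k))" .
  have ae0: "AE \<omega> in M. X \<omega> \<noteq> 0"
    by (rule ae_nonzero[OF X]) (simp add: d)
  have "AE \<omega> in M. x (X \<omega>) = (\<Sum>k. f k \<omega>)"
    using ae0 AE_space
  proof eventually_elim
    case (elim \<omega>)
    have "(\<Sum>k. f k \<omega>) = (\<Sum>k\<in>{X \<omega> - 1}. f k \<omega>)"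
      by (rule suminf_finite) (auto simp: f_def indicator_def)
    then show ?case using elim by (simp add: f_def indicator_def)
  qed
  then have "expectation (\<lambda>\<omega>. x (X \<omega>)) = (\<integral>\<omega>. (\<Sum>k. f k \<omega>) \<partial>M)"
    by (rule integral_cong_AE[OF measurable_compose[OF X borel_measurable_count_space] borel_measurable_integrable[OF sumint]])
  then show ?thesis using eq by simp
qed

lemma (in prob_space) wlln:
  fixes x :: "nat \<Rightarrow> real" and X :: "nat \<Rightarrow> 'a \<Rightarrow> nat"
  assumes X: "\<And>i. i \<ge> 1 \<Longrightarrow> X i \<in> measurable M (count_space UNIV)"
    and ind: "indep_vars (\<lambda>_. count_space UNIV) X {1..}"
    and d: "\<And>i k. i \<ge> 1 \<Longrightarrow> k \<ge> 1 \<Longrightarrow> prob {\<omega>\<in>space M. X i \<omega> = k} = (1/2)^k"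
    and K: "\<And>k. \<bar>x k\<bar> \<le> K0" and \<delta>: "\<delta> > 0"
  shows "(\<lambda>n. prob {\<omega>\<in>space M. \<delta> \<le> \<bar>(\<Sum>i\<in>{1..n}. x (X i \<omega>)) / real n - (\<Sum>k. (1/2) ^ Suc k * x (Suc k))\<bar>}) \<longlonglongrightarrow> 0"
proof -
  define c where "c = (\<Sum>k. (1/2) ^ Suc k * x (Suc k))"
  define Z where "Z i \<omega> = x (X i \<omega>) - c" for i \<omega>
  define B where "B = 2 * K0"
  have K0: "0 \<le> K0" using K[of 0] by linarith
  have cb: "\<bar>c\<bar> \<le> K0"
  proof -
    have sK: "(\<lambda>k. (1/2::real) ^ Suc k * K0) sums (1 * K0)" using half_sums by (rule sums_mult2)
    have nb: "norm ((1/2::real) ^ Suc k * x (Suc k)) \<le> (1/2) ^ Suc k * K0" for k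
      using K[of "Suc k"] by (simp add: abs_mult mult_left_mono)
    have sn: "summable (\<lambda>k. norm ((1/2::real) ^ Suc k * x (Suc k)))"
      by (rule summable_comparison_test[OF _ sums_summable[OF sK]]) (use nb in auto)
    have "norm c \<le> (\<Sum>k. norm ((1/2::real) ^ Suc k * x (Suc k)))"
      unfolding c_def by (rule summable_norm[OF sn])
    also have "\<dots> \<le> (\<Sum>k. (1/2::real) ^ Suc k * K0)"
      by (rule suminf_le[OF nb sn sums_summable[OF sK]])
    also have "\<dots> = K0" using sK sums_unique by force
    finally show ?thesis by simp
  qed
  have Zb: "\<bar>Z i \<omega>\<bar> \<le> B" for i \<omega>
    using K[of "X i \<omega>"] cb by (simp add: Z_def B_def)
  have B0: "0 \<le> B" using K0 by (simp add: B_def)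
  have Zm: "Z i \<in> borel_measurable M" if "i \<ge> 1" for i
    unfolding Z_def using measurable_compose[OF X[OF that] borel_measurable_count_space] .
  have xm: "(\<lambda>\<omega>. x (X i \<omega>)) \<in> borel_measurable M" if "i \<ge> 1" for i
    using measurable_compose[OF X[OF that] borel_measurable_count_space] .
  have ZZint: "integrable M (\<lambda>\<omega>. Z i \<omega> * Z j \<omega>)" if "i \<ge> 1" "j \<ge> 1" for i j
  proof (rule integrable_const_bound[where B="B*B"])
    show "AE \<omega> in M. norm (Z i \<omega> * Z j \<omega>) \<le> B * B"
      using Zb B0 by (auto simp: abs_mult intro!: mult_mono)
    show "(\<lambda>\<omega>. Z i \<omega> * Z j \<omega>) \<in> borel_measurable M" using Zm that by auto
  qed
  have Zint: "integrable M (Z i)" if "i \<ge> 1" for i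
    by (rule integrable_const_bound[where B=B]) (use Zb Zm that in auto)
  have xint: "integrable M (\<lambda>\<omega>. x (X i \<omega>))" if "i \<ge> 1" for i
    by (rule integrable_const_bound[where B=K0]) (use K xm that in auto)
  have EZ: "expectation (Z i) = 0" if "i \<ge> 1" for i
  proof -
    have "expectation (Z i) = expectation (\<lambda>\<omega>. x (X i \<omega>)) - expectation (\<lambda>\<omega>. c)"
      unfolding Z_def by (rule Bochner_Integration.integral_diff[OF xint[OF that]]) simp
    moreover have "expectation (\<lambda>\<omega>. x (X i \<omega>)) = c"
      unfolding c_def by (rule mean_x[OF X[OF that]]) (use d[OF that] K in auto)
    ultimately show ?thesis by (simp add: prob_space)
  qed
  have indZ: "indep_vars (\<lambda>_. borel) Z {1..}"
    unfolding Z_def by (rule indep_vars_compose2[OF ind]) simp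
  have cross: "expectation (\<lambda>\<omega>. Z i \<omega> * Z j \<omega>) = 0" if "i \<ge> 1" "j \<ge> 1" "i \<noteq> j" for i j
  proof -
    have "indep_vars (\<lambda>_. borel) Z {i,j}"
      by (rule indep_vars_subset[OF indZ]) (use that in auto)
    then have "(\<integral>\<omega>. (\<Prod>l\<in>{i,j}. Z l \<omega>) \<partial>M) = (\<Prod>l\<in>{i,j}. expectation (Z l))"
      by (rule indep_vars_lebesgue_integral[rotated]) (use that Zint in auto)
    then show ?thesis using that EZ by simp
  qed
  have diag: "expectation (\<lambda>\<omega>. Z i \<omega> * Z j \<omega>) \<le> (if i = j then B*B else 0)"
    if "i \<ge> 1" "j \<ge> 1" for i j
  proof (cases "i = j")
    case True
    have "expectation (\<lambda>\<omega>. Z i \<omega> * Z j \<omega>) \<le> expectation (\<lambda>\<omega>. B * B)"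
    proof (rule integral_mono[OF ZZint[OF that]])
      show "integrable M (\<lambda>\<omega>. B * B)" by simp
      fix \<omega> assume "\<omega> \<in> space M"
      have "\<bar>Z i \<omega> * Z j \<omega>\<bar> \<le> B * B"
        unfolding abs_mult by (rule mult_mono[OF Zb Zb B0 abs_ge_zero])
      then show "Z i \<omega> * Z j \<omega> \<le> B * B" by (rule abs_le_D1)
    qed
    then show ?thesis using True by (simp add: prob_space)
  qed (use cross that in simp)
  have sq: "expectation (\<lambda>\<omega>. (\<Sum>i\<in>{1..n}. Z i \<omega>)^2) \<le> real n * (B*B)" 
    and sqi: "integrable M (\<lambda>\<omega>. (\<Sum>i\<in>{1..n}. Z i \<omega>)^2)" for n
  proof -
    have eq: "(\<lambda>\<omega>. (\<Sum>i\<in>{1..n}. Z i \<omega>)^2) = (\<lambda>\<omega>. \<Sum>i\<in>{1..n}. \<Sum>j\<in>{1..n}. Z i \<omega> * Z j \<omega>)"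
      by (simp add: power2_eq_square sum_product)
    have ii: "integrable M (\<lambda>\<omega>. \<Sum>j\<in>{1..n}. Z i \<omega> * Z j \<omega>)" if "i \<in> {1..n}" for i
      using that by (intro Bochner_Integration.integrable_sum ZZint) auto
    show "integrable M (\<lambda>\<omega>. (\<Sum>i\<in>{1..n}. Z i \<omega>)^2)"
      unfolding eq by (intro Bochner_Integration.integrable_sum ii)
    have "expectation (\<lambda>\<omega>. (\<Sum>i\<in>{1..n}. Z i \<omega>)^2)
        = (\<Sum>i\<in>{1..n}. \<Sum>j\<in>{1..n}. expectation (\<lambda>\<omega>. Z i \<omega> * Z j \<omega>))"
      unfolding eq using ii ZZint by (simp add: Bochner_Integration.integral_sum)
    also have "\<dots> \<le> (\<Sum>i\<in>{1..n}. \<Sum>j\<in>{1..n}. (if i = j then B*B else 0))"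
      by (intro sum_mono diag) auto
    also have "\<dots> = real n * (B*B)" by simp
    finally show "expectation (\<lambda>\<omega>. (\<Sum>i\<in>{1..n}. Z i \<omega>)^2) \<le> real n * (B*B)" .
  qed
  have bound: "prob {\<omega>\<in>space M. \<delta> \<le> \<bar>(\<Sum>i\<in>{1..n}. x (X i \<omega>)) / real n - c\<bar>} \<le> (B*B/\<delta>^2) * (1 / real n)"
    if n: "n \<ge> 1" for n
  proof -
    let ?u = "\<lambda>\<omega>. (\<Sum>i\<in>{1..n}. Z i \<omega>)^2"
    have npos: "real n > 0" using n by simp
    have sub: "{\<omega>\<in>space M. \<delta> \<le> \<bar>(\<Sum>i\<in>{1..n}. x (X i \<omega>)) / real n - c\<bar>} \<subseteq> {\<omega>\<in>space M. ?u \<omega> \<ge> (real n * \<delta>)^2}"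
    proof safe
      fix \<omega> assume w: "\<omega> \<in> space M" "\<delta> \<le> \<bar>(\<Sum>i\<in>{1..n}. x (X i \<omega>)) / real n - c\<bar>"
      have "(\<Sum>i\<in>{1..n}. Z i \<omega>) = (\<Sum>i\<in>{1..n}. x (X i \<omega>)) - real n * c"
        by (simp add: Z_def sum_subtractf)
      then have "(\<Sum>i\<in>{1..n}. x (X i \<omega>)) / real n - c = (\<Sum>i\<in>{1..n}. Z i \<omega>) / real n"
        using npos by (simp add: field_simps)
      with w have "\<delta> \<le> \<bar>\<Sum>i\<in>{1..n}. Z i \<omega>\<bar> / real n" by simp
      then have "real n * \<delta> \<le> \<bar>\<Sum>i\<in>{1..n}. Z i \<omega>\<bar>" using npos by (simp add: field_simps)
      then have "(real n * \<delta>)^2 \<le> \<bar>\<Sum>i\<in>{1..n}. Z i \<omega>\<bar>^2"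
        using npos \<delta> by (intro power_mono) auto
      then show "(real n * \<delta>)^2 \<le> ?u \<omega>" by simp
    qed
    have um: "?u \<in> borel_measurable M" using sqi[of n] by (rule borel_measurable_integrable)
    have "prob {\<omega>\<in>space M. \<delta> \<le> \<bar>(\<Sum>i\<in>{1..n}. x (X i \<omega>)) / real n - c\<bar>} \<le> prob {\<omega>\<in>space M. ?u \<omega> \<ge> (real n * \<delta>)^2}"
      by (rule finite_measure_mono[OF sub]) (use um in measurable)
    also have "\<dots> \<le> expectation ?u / (real n * \<delta>)^2"
      by (rule integral_Markov_inequality_measure[OF sqi[of n], where A="space M"]) (use npos \<delta> in auto)
    also have "\<dots> \<le> (real n * (B*B)) / (real n * \<delta>)^2"
      by (rule divide_right_mono[OF sq]) simp
    also have "\<dots> = (B*B/\<delta>^2) * (1 / real n)"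
      using npos \<delta> by (simp add: field_simps power2_eq_square)
    finally show ?thesis .
  qed
  have lim: "(\<lambda>n. (B*B/\<delta>^2) * (1 / real n)) \<longlonglongrightarrow> 0"
    by (rule tendsto_mult_right_zero[OF lim_inverse_n'])
  show ?thesis unfolding c_def[symmetric]
    by (rule tendsto_sandwich[OF _ _ tendsto_const lim])
       (use bound in \<open>auto intro: eventually_sequentiallyI[of 1]\<close>)
qed


theorem mainTheorem8:
  fixes M :: "'a measure" and \<xi> :: "nat \<Rightarrow> 'a \<Rightarrow> nat"
    and x :: "nat \<Rightarrow> real" and T \<epsilon> :: real
  assumes "prob_space M"
    and "\<And>i. i \<ge> 1 \<Longrightarrow> \<xi> i \<in> measurable M (count_space UNIV)"
    and "prob_space.indep_vars M (\<lambda>_. count_space UNIV) \<xi> {1..}"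
    and "\<And>i k. i \<ge> 1 \<Longrightarrow> k \<ge> 1 \<Longrightarrow> measure M {\<omega> \<in> space M. \<xi> i \<omega> = k} = (1/2) ^ k"
    and "x \<in> l1" and "T > 0" and "\<epsilon> > 0"
  shows "(\<lambda>n. measure M {\<omega> \<in> space M. \<exists>t\<in>{0..T}.
            l1norm (\<lambda>j. prod_exp (\<lambda>i. \<xi> i \<omega>) n (t / real n) x j - op_exp opEA t x j) > \<epsilon>})
         \<longlonglongrightarrow> 0"
proof -
  interpret prob_space M by (rule assms(1))
  define c where "c = (\<Sum>k. (1/2) ^ Suc k * x (Suc k))"
  define K0 where "K0 = (\<Sum>k. \<bar>x k\<bar>)"
  define \<delta> where "\<delta> = \<epsilon> / T"
  have \<delta>pos: "\<delta> > 0" using assms(6,7) by (simp add: \<delta>_def)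
  have sx: "summable (\<lambda>k. \<bar>x k\<bar>)" using assms(5) by (simp add: l1_def)
  have K: "\<bar>x k\<bar> \<le> K0" for k
    using sum_le_suminf[OF sx, of "{k}"] by (simp add: K0_def)
  have W: "(\<lambda>n. prob {\<omega>\<in>space M. \<delta> \<le> \<bar>(\<Sum>i\<in>{1..n}. x (\<xi> i \<omega>)) / real n - (\<Sum>k. (1/2) ^ Suc k * x (Suc k))\<bar>}) \<longlonglongrightarrow> 0"
    by (rule wlln) (use assms(2-4) K \<delta>pos in auto)
  define S where "S n = {\<omega> \<in> space M. \<exists>t\<in>{0..T}.
            l1norm (\<lambda>j. prod_exp (\<lambda>i. \<xi> i \<omega>) n (t / real n) x j - op_exp opEA t x j) > \<epsilon>}" for n
  define D where "D n = {\<omega>\<in>space M. \<delta> \<le> \<bar>(\<Sum>i\<in>{1..n}. x (\<xi> i \<omega>)) / real n - c\<bar>}" for n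
  have xm: "(\<lambda>\<omega>. x (\<xi> i \<omega>)) \<in> borel_measurable M" if "i \<ge> 1" for i
    using measurable_compose[OF assms(2)[OF that] borel_measurable_count_space] .
  have bound: "measure M (S n) \<le> prob (D n)" for n
  proof -
    have sm: "(\<lambda>\<omega>. \<Sum>i\<in>{1..n}. x (\<xi> i \<omega>)) \<in> borel_measurable M"
      by (rule borel_measurable_sum) (use xm in auto)
    have Dm: "D n \<in> sets M" unfolding D_def using sm by measurable
    have ae: "AE \<omega> in M. \<forall>i\<in>{1..n}. \<xi> i \<omega> \<noteq> 0"
    proof (rule AE_finite_allI)
      fix i assume "i \<in> {1..n}"
      then have i: "i \<ge> 1" by simp
      show "AE \<omega> in M. \<xi> i \<omega> \<noteq> 0"
        by (rule ae_nonzero[OF assms(2)[OF i]]) (use assms(4) i in auto)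
    qed simp
    have "AE \<omega> in M. \<omega> \<in> S n \<longrightarrow> \<omega> \<in> D n"
      using ae
    proof eventually_elim
      case (elim \<omega>)
      show ?case
      proof
        assume "\<omega> \<in> S n"
        then obtain t where w: "\<omega> \<in> space M" and t: "0 \<le> t" "t \<le> T"
          and gt: "l1norm (\<lambda>j. prod_exp (\<lambda>i. \<xi> i \<omega>) n (t / real n) x j - op_exp opEA t x j) > \<epsilon>"
          unfolding S_def by auto
        let ?d = "(\<Sum>i\<in>{1..n}. x (\<xi> i \<omega>)) / real n - c"
        have "\<epsilon> < \<bar>t * ?d\<bar>"
          using gt diff_formula[of n "\<lambda>i. \<xi> i \<omega>" t x] elim by (simp add: c_def)
        also have "\<dots> = t * \<bar>?d\<bar>" using t by (simp add: abs_mult)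
        also have "\<dots> \<le> T * \<bar>?d\<bar>" using t by (intro mult_right_mono) auto
        finally have "\<epsilon> / T < \<bar>?d\<bar>" using assms(6) by (simp add: field_simps)
        then show "\<omega> \<in> D n" using w by (simp add: D_def \<delta>_def)
      qed
    qed
    then have "emeasure M (S n) \<le> emeasure M (D n)" by (rule emeasure_mono_AE[OF _ Dm])
    then have "enn2real (emeasure M (S n)) \<le> enn2real (emeasure M (D n))"
      by (rule enn2real_mono) (simp add: less_top[symmetric])
    then show ?thesis by (simp add: measure_def)
  qed
  show ?thesis
    unfolding S_def[symmetric]
  proof (rule tendsto_sandwich[OF _ _ tendsto_const W])
    show "\<forall>\<^sub>F n in sequentially. 0 \<le> measure M (S n)" by simp
    show "\<forall>\<^sub>F n in sequentially. measure M (S n) \<le> prob {\<omega>\<in>space M. \<delta> \<le> \<bar>(\<Sum>i\<in>{1..n}. x (\<xi> i \<omega>)) / real n - (\<Sum>k. (1/2) ^ Suc k * x (Suc k))\<bar>}"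
      using bound by (simp add: D_def c_def)
  qed
qed

end
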